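(* Assume $d_0\delta>2$, and let $\varepsilon_0=\frac{d_0}2-\frac1\delta>0$ and $t=\frac{d_0}{2}$. Let $G=(L\cup R,E)$ be a $(c,d,\alpha,\delta)$-bipartite expander with $L=[n]$, $C_0\subseteq\mathbb{F}_2^d$ a linear code of minimum distance $d_0$, $x\in\mathbb{F}_2^n$ and $y\in T(G,C_0)$ with $d_H(x,y)\le\alpha n$, and $F=F(x,y)$. For $q\in W$, let $P_q$ be the set of $i\in[n]$ such that $p_i=q$ at the end of $\mathsf{DeterFlip}(x,q)$. Then there exists $q\in W\setminus\{0\}$ such that $|P_q\cap F|-|P_q\setminus F|\ge\frac{\varepsilon_0\delta}{2ct^2}|F|$.
   Context: A bipartite graph is $(c,d)$-regular if left degrees are $c$ and right degrees $d$; $N(S)$ is the neighborhood of $S$. A $(c,d,\alpha,\delta)$-bipartite expander ($\alpha,\delta\in(0,1]$) is a $(c,d)$-regular bipartite graph with $|N(S)|\ge\delta c|S|$ for all $S\subseteq L$, $|S|\le\alpha|L|$. Tanner code: $L=[n]$, for each $v\in R$ a fixed ordering of $N(v)$ defines $x_{N(v)}\in\mathbb{F}_2^d$, and $T(G,C_0)=\{x:x_{N(v)}\in C_0\ \forall v\in R\}$. $F(x,y)=\{i\in[n]:x_i\ne y_i\}$; $d_H$ is Hamming distance. $\mathsf{Decode}(z)$ is the codeword of $C_0$ closest to $z\in\mathbb{F}_2^d$, ties broken lexicographically. $W=\{\frac{i}{cd_0}:i\in\mathbb{Z},0\le i\le cd_0\}$. $\mathsf{DeterFlip}(x,q)$ for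 $q\in\mathbb{R}$: set $p_1=\dots=p_n=0$; for each $v\in R$, let $w_v=\mathsf{Decode}(x_{N(v)})$; if $1\le d_H(w_v,x_{N(v)})<t$, let $i$ be the smallest element of $N(v)$ where $w_v$ and $x_{N(v)}$ differ and increase $p_i$ by $\frac{t-d_H(w_v,x_{N(v)})}{ct}$; then flip every $x_i$ with $p_i=q$ and return the result. *)

theory Defs
  imports Main "HOL.Real"
begin

section \<open>Binary words (elements of F_2^d represented as bool lists, F_2 = bool with xor)\<close>

definition hdist :: "bool list \<Rightarrow> bool list \<Rightarrow> nat" where
  "hdist u w = card {j. j < length u \<and> u ! j \<noteq> w ! j}"

definition lex_le :: "bool list \<Rightarrow> bool list \<Rightarrow> bool" where
  "lex_le u w \<longleftrightarrow> u = w \<or> (u, w) \<in> lexord {(a, b). a < b}"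

definition linear_code :: "nat \<Rightarrow> bool list set \<Rightarrow> bool" where
  "linear_code d C0 \<longleftrightarrow> C0 \<subseteq> {w. length w = d} \<and> replicate d False \<in> C0 \<and>
     (\<forall>u\<in>C0. \<forall>w\<in>C0. map2 (\<noteq>) u w \<in> C0)"

definition min_dist :: "bool list set \<Rightarrow> nat \<Rightarrow> bool" where
  "min_dist C0 d0 \<longleftrightarrow> (\<exists>u\<in>C0. \<exists>w\<in>C0. u \<noteq> w \<and> hdist u w = d0) \<and>
     (\<forall>u\<in>C0. \<forall>w\<in>C0. u \<noteq> w \<longrightarrow> d0 \<le> hdist u w)"

definition Decode :: "bool list set \<Rightarrow> bool list \<Rightarrow> bool list" where
  "Decode C0 z = (THE w. w \<in> C0 \<and> (\<forall>u\<in>C0. hdist w z \<le> hdist u z) \<and>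
      (\<forall>u\<in>C0. hdist u z = hdist w z \<longrightarrow> lex_le w u))"

section \<open>Bipartite graphs with L = [n] = {1..n}; nbr v is the fixed ordering of N(v)\<close>

definition bipartite_regular :: "nat \<Rightarrow> 'r set \<Rightarrow> ('r \<Rightarrow> nat list) \<Rightarrow> nat \<Rightarrow> nat \<Rightarrow> bool" where
  "bipartite_regular n R nbr c d \<longleftrightarrow> finite R \<and> 0 < c \<and> 0 < d \<and>
     (\<forall>v\<in>R. length (nbr v) = d \<and> distinct (nbr v) \<and> set (nbr v) \<subseteq> {1..n}) \<and>
     (\<forall>i\<in>{1..n}. card {v\<in>R. i \<in> set (nbr v)} = c)"

definition nbhd :: "'r set \<Rightarrow> ('r \<Rightarrow> nat list) \<Rightarrow> nat set \<Rightarrow> 'r set" where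
  "nbhd R nbr S = {v\<in>R. \<exists>i\<in>S. i \<in> set (nbr v)}"

definition bip_expander ::
  "nat \<Rightarrow> 'r set \<Rightarrow> ('r \<Rightarrow> nat list) \<Rightarrow> nat \<Rightarrow> nat \<Rightarrow> real \<Rightarrow> real \<Rightarrow> bool" where
  "bip_expander n R nbr c d \<alpha> \<delta> \<longleftrightarrow> bipartite_regular n R nbr c d \<and>
     0 < \<alpha> \<and> \<alpha> \<le> 1 \<and> 0 < \<delta> \<and> \<delta> \<le> 1 \<and>
     (\<forall>S. S \<subseteq> {1..n} \<longrightarrow> real (card S) \<le> \<alpha> * real n \<longrightarrow>
          real (card (nbhd R nbr S)) \<ge> \<delta> * real c * real (card S))"

definition local_view :: "('r \<Rightarrow> nat list) \<Rightarrow> (nat \<Rightarrow> bool) \<Rightarrow> 'r \<Rightarrow> bool list" where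
  "local_view nbr x v = map x (nbr v)"

definition tanner_code :: "'r set \<Rightarrow> ('r \<Rightarrow> nat list) \<Rightarrow> bool list set \<Rightarrow> (nat \<Rightarrow> bool) set" where
  "tanner_code R nbr C0 = {y. \<forall>v\<in>R. local_view nbr y v \<in> C0}"

definition diffset :: "nat \<Rightarrow> (nat \<Rightarrow> bool) \<Rightarrow> (nat \<Rightarrow> bool) \<Rightarrow> nat set" where
  "diffset n x y = {i\<in>{1..n}. x i \<noteq> y i}"

definition loc_err :: "('r \<Rightarrow> nat list) \<Rightarrow> bool list set \<Rightarrow> (nat \<Rightarrow> bool) \<Rightarrow> 'r \<Rightarrow> nat" where
  "loc_err nbr C0 x v = hdist (Decode C0 (local_view nbr x v)) (local_view nbr x v)"

definition first_diff :: "('r \<Rightarrow> nat list) \<Rightarrow> bool list set \<Rightarrow> (nat \<Rightarrow> bool) \<Rightarrow> 'r \<Rightarrow> nat" where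
  "first_diff nbr C0 x v = Min {nbr v ! j | j. j < length (nbr v) \<and>
       Decode C0 (local_view nbr x v) ! j \<noteq> x (nbr v ! j)}"

text \<open>The final values p_i of DeterFlip(x,q) (they do not depend on q).\<close>
definition deter_p :: "'r set \<Rightarrow> ('r \<Rightarrow> nat list) \<Rightarrow> nat \<Rightarrow> bool list set \<Rightarrow> real \<Rightarrow>
    (nat \<Rightarrow> bool) \<Rightarrow> nat \<Rightarrow> real" where
  "deter_p R nbr c C0 t x i =
     (\<Sum>v\<in>{v\<in>R. 1 \<le> loc_err nbr C0 x v \<and> real (loc_err nbr C0 x v) < t \<and>
                   first_diff nbr C0 x v = i}.
        (t - real (loc_err nbr C0 x v)) / (real c * t))"

definition deter_flip :: "nat \<Rightarrow> 'r set \<Rightarrow> ('r \<Rightarrow> nat list) \<Rightarrow> nat \<Rightarrow> bool list set \<Rightarrow> real \<Rightarrow>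
    (nat \<Rightarrow> bool) \<Rightarrow> real \<Rightarrow> (nat \<Rightarrow> bool)" where
  "deter_flip n R nbr c C0 t x q =
     (\<lambda>i. if i \<in> {1..n} \<and> deter_p R nbr c C0 t x i = q then \<not> x i else x i)"

definition Pset :: "nat \<Rightarrow> 'r set \<Rightarrow> ('r \<Rightarrow> nat list) \<Rightarrow> nat \<Rightarrow> bool list set \<Rightarrow> real \<Rightarrow>
    (nat \<Rightarrow> bool) \<Rightarrow> real \<Rightarrow> nat set" where
  "Pset n R nbr c C0 t x q = {i\<in>{1..n}. deter_p R nbr c C0 t x i = q}"

definition Wset :: "nat \<Rightarrow> nat \<Rightarrow> real set" where
  "Wset c d0 = {real i / real (c * d0) | i. i \<le> c * d0}"

end

theory Submission
  imports Defs
begin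

lemma lexle_antisym: "lex_le u w \<Longrightarrow> lex_le w u \<Longrightarrow> u = w"
proof (rule ccontr)
  assume a: "lex_le u w" "lex_le w u" "u \<noteq> w"
  then have "(u,w) \<in> lexord {(a, b::bool). a < b}" "(w,u) \<in> lexord {(a, b::bool). a < b}"
    by (auto simp: lex_le_def)
  moreover have "trans {(a, b::bool). a < b}" by (auto simp: trans_def)
  ultimately have "(u,u) \<in> lexord {(a, b::bool). a < b}" using lexord_trans by blast
  moreover have "(u,u) \<notin> lexord {(a, b::bool). a < b}" by (rule lexord_irreflexive) auto
  ultimately show False by blast
qed

lemma wf_boolless: "wf {(a, b::bool). a < b}"
proof -
  have "{(a, b::bool). a < b} = {(False, True)}" by auto
  then show ?thesis by (simp add: wf_insert)
qed

lemma decode_ex: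
  assumes C: "C0 \<subseteq> {w. length w = d}" "u0 \<in> C0"
  shows "\<exists>!w. w \<in> C0 \<and> (\<forall>u\<in>C0. hdist w z \<le> hdist u z) \<and>
      (\<forall>u\<in>C0. hdist u z = hdist w z \<longrightarrow> lex_le w u)"
proof -
  obtain w0 where w0: "w0 \<in> C0" "\<forall>u. u \<in> C0 \<longrightarrow> hdist w0 z \<le> hdist u z"
    using ex_has_least_nat[of "\<lambda>w. w \<in> C0" u0 "\<lambda>w. hdist w z"] C by blast
  define M where "M = {w\<in>C0. hdist w z = hdist w0 z}"
  have "w0 \<in> M" using w0 by (auto simp: M_def)
  then obtain m where m: "m \<in> M" "\<forall>y. (y, m) \<in> lex {(a, b::bool). a < b} \<longrightarrow> y \<notin> M"
    using wf_boolless[THEN wf_lex] unfolding wf_eq_minimal by metis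
  have P: "m \<in> C0 \<and> (\<forall>u\<in>C0. hdist m z \<le> hdist u z) \<and>
      (\<forall>u\<in>C0. hdist u z = hdist m z \<longrightarrow> lex_le m u)"
  proof (intro conjI ballI impI)
    show "m \<in> C0" using m by (auto simp: M_def)
    fix u assume u: "u \<in> C0"
    show "hdist m z \<le> hdist u z" using m w0 u by (auto simp: M_def)
    assume "hdist u z = hdist m z"
    then have uM: "u \<in> M" using m u by (auto simp: M_def)
    have len: "length u = length m" using uM m C by (auto simp: M_def)
    have "total {(a, b::bool). a < b}" by (auto simp: total_on_def)
    then have "total (lexord {(a, b::bool). a < b})" by (rule total_lexord)
    then have "u = m \<or> (u,m) \<in> lexord {(a, b::bool). a < b} \<or> (m,u) \<in> lexord {(a, b::bool). a < b}"
      by (auto simp: total_on_def)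
    moreover have "(u,m) \<notin> lexord {(a, b::bool). a < b}"
      using m(2) uM len by (auto simp: lexord_lex)
    ultimately show "lex_le m u" by (auto simp: lex_le_def)
  qed
  show ?thesis
  proof (rule ex1I[of _ m])
    show "m \<in> C0 \<and> (\<forall>u\<in>C0. hdist m z \<le> hdist u z) \<and>
      (\<forall>u\<in>C0. hdist u z = hdist m z \<longrightarrow> lex_le m u)" by (rule P)
    fix w assume w: "w \<in> C0 \<and> (\<forall>u\<in>C0. hdist w z \<le> hdist u z) \<and>
      (\<forall>u\<in>C0. hdist u z = hdist w z \<longrightarrow> lex_le w u)"
    then have "hdist w z = hdist m z" using P by (meson le_antisym)
    then have "lex_le w m" "lex_le m w" using w P by auto
    then show "w = m" by (rule lexle_antisym)
  qed
qed

lemma decode_props: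
  assumes "linear_code d C0"
  shows "Decode C0 z \<in> C0 \<and> (\<forall>u\<in>C0. hdist (Decode C0 z) z \<le> hdist u z)"
proof -
  have C: "C0 \<subseteq> {w. length w = d}" "replicate d False \<in> C0" using assms by (auto simp: linear_code_def)
  show ?thesis unfolding Decode_def using theI'[OF decode_ex[OF C, of z]] by blast
qed

lemma hdist_sym: "length u = length w \<Longrightarrow> hdist u w = hdist w u"
  unfolding hdist_def by (metis)

lemma hdist_tri:
  assumes "length u = length w" "length z = length w"
  shows "hdist u w \<le> hdist u z + hdist z w"
proof -
  have "{j. j < length u \<and> u ! j \<noteq> w ! j} \<subseteq> {j. j < length u \<and> u ! j \<noteq> z ! j} \<union> {j. j < length z \<and> z ! j \<noteq> w ! j}"
    using assms by auto
  then have "hdist u w \<le> card ({j. j < length u \<and> u ! j \<noteq> z ! j} \<union> {j. j < length z \<and> z ! j \<noteq> w ! j})"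
    unfolding hdist_def by (intro card_mono) auto
  also have "\<dots> \<le> hdist u z + hdist z w" unfolding hdist_def by (rule card_Un_le)
  finally show ?thesis .
qed

lemma hdist_map:
  assumes "distinct ns"
  shows "hdist (map y ns) (map x ns) = card (set ns \<inter> {i. x i \<noteq> y i})"
proof -
  have "set ns \<inter> {i. x i \<noteq> y i} = nth ns ` {j. j < length (map y ns) \<and> map y ns ! j \<noteq> map x ns ! j}"
    by (auto simp: in_set_conv_nth)
  moreover have "inj_on (nth ns) {j. j < length (map y ns) \<and> map y ns ! j \<noteq> map x ns ! j}"
    by (rule inj_on_nth[OF assms]) auto
  ultimately show ?thesis unfolding hdist_def by (simp add: card_image)
qed

theorem lemma4p1:
  fixes n c d d0 :: nat and R :: "'r set" and nbr :: "'r \<Rightarrow> nat list"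
    and \<alpha> \<delta> :: real and C0 :: "bool list set" and x y :: "nat \<Rightarrow> bool"
  assumes "real d0 * \<delta> > 2"
    and "bip_expander n R nbr c d \<alpha> \<delta>"
    and "linear_code d C0" and "min_dist C0 d0"
    and "y \<in> tanner_code R nbr C0"
    and "real (card (diffset n x y)) \<le> \<alpha> * real n"
  shows "\<exists>q \<in> Wset c d0 - {0}.
     real (card (Pset n R nbr c C0 (real d0 / 2) x q \<inter> diffset n x y))
       - real (card (Pset n R nbr c C0 (real d0 / 2) x q - diffset n x y))
     \<ge> (real d0 / 2 - 1 / \<delta>) * \<delta> / (2 * real c * (real d0 / 2)^2) * real (card (diffset n x y))"
proof -
  note bip = assms(2)[unfolded bip_expander_def bipartite_regular_def]
  have finR: "finite R" and cpos: "c > 0" and dpos: "0 < \<delta>" using bip by auto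
  have nbrp: "\<And>v. v \<in> R \<Longrightarrow> length (nbr v) = d \<and> distinct (nbr v) \<and> set (nbr v) \<subseteq> {1..n}"
    using bip by auto
  have deg: "\<And>i. i \<in> {1..n} \<Longrightarrow> card {v\<in>R. i \<in> set (nbr v)} = c" using bip by auto
  have expa: "\<And>S. S \<subseteq> {1..n} \<Longrightarrow> real (card S) \<le> \<alpha> * real n \<Longrightarrow>
          real (card (nbhd R nbr S)) \<ge> \<delta> * real c * real (card S)" using bip by auto
  have d0pos: "d0 > 0" using assms(1) dpos by (cases "d0 = 0") auto
  have Clen: "\<And>w. w \<in> C0 \<Longrightarrow> length w = d" using assms(3) by (auto simp: linear_code_def)
  have md: "\<And>u w. u \<in> C0 \<Longrightarrow> w \<in> C0 \<Longrightarrow> u \<noteq> w \<Longrightarrow> d0 \<le> hdist u w"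
    using assms(4) by (auto simp: min_dist_def)
  define t where "t = real d0 / 2"
  have tpos: "t > 0" using d0pos by (simp add: t_def)
  define F where "F = diffset n x y"
  have finF: "finite F" and Fsub: "F \<subseteq> {1..n}" by (auto simp: F_def diffset_def)
  define l where "l = loc_err nbr C0 x"
  define fd where "fd = first_diff nbr C0 x"
  define S where "S = {v\<in>R. 1 \<le> l v \<and> real (l v) < t}"
  have finS: "finite S" using finR by (auto simp: S_def)
  define val where "val v = (t - real (l v)) / (real c * t)" for v
  define p where "p = deter_p R nbr c C0 t x"
  define e where "e v = card (set (nbr v) \<inter> F)" for v
  define sg where "sg i = (if i \<in> F then 1 else (-1::real))" for i
  define P where "P = Pset n R nbr c C0 t x"
  define W where "W = Wset c d0"
  define a where "a q = real (card (P q \<inter> F)) - real (card (P q - F))" for q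
  define X where "X = (real d0 / 2 - 1 / \<delta>) * \<delta> / (2 * real c * (real d0 / 2)^2) * real (card F)"

  have yv: "map y (nbr v) \<in> C0" if "v \<in> R" for v
    using assms(5) that by (auto simp: tanner_code_def local_view_def)
  have dec: "Decode C0 (map x (nbr v)) \<in> C0 \<and> (\<forall>u\<in>C0. hdist (Decode C0 (map x (nbr v))) (map x (nbr v)) \<le> hdist u (map x (nbr v)))" for v
    using decode_props[OF assms(3)] by blast
  have l_eq: "l v = hdist (Decode C0 (map x (nbr v))) (map x (nbr v))" for v
    by (simp add: l_def loc_err_def local_view_def)
  have e_eq: "e v = hdist (map y (nbr v)) (map x (nbr v))" if "v \<in> R" for v
  proof -
    have "set (nbr v) \<inter> {i. x i \<noteq> y i} = set (nbr v) \<inter> F"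
      using nbrp[OF that] by (auto simp: F_def diffset_def)
    then show ?thesis using hdist_map[of "nbr v" y x] nbrp[OF that] by (simp add: e_def)
  qed
  have l_le_e: "l v \<le> e v" if "v \<in> R" for v
    using dec[of v] yv[OF that] by (simp add: l_eq e_eq[OF that])
  have tri: "d0 \<le> l v + e v" if "v \<in> R" "Decode C0 (map x (nbr v)) \<noteq> map y (nbr v)" for v
  proof -
    let ?w = "Decode C0 (map x (nbr v))"
    have "d0 \<le> hdist ?w (map y (nbr v))" using md dec yv[OF that(1)] that(2) by blast
    also have "\<dots> \<le> hdist ?w (map x (nbr v)) + hdist (map x (nbr v)) (map y (nbr v))"
      by (rule hdist_tri) (use Clen dec yv[OF that(1)] nbrp[OF that(1)] in auto)
    also have "hdist (map x (nbr v)) (map y (nbr v)) = e v"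
      using e_eq[OF that(1)] hdist_sym[of "map x (nbr v)" "map y (nbr v)"] by simp
    finally show ?thesis by (simp add: l_eq)
  qed
  have fd_mem: "fd v \<in> set (nbr v) \<and> (\<exists>j < length (nbr v). nbr v ! j = fd v \<and>
       Decode C0 (map x (nbr v)) ! j \<noteq> x (nbr v ! j))" if "v \<in> R" "1 \<le> l v" for v
  proof -
    let ?w = "Decode C0 (map x (nbr v))"
    let ?A = "{nbr v ! j | j. j < length (nbr v) \<and> ?w ! j \<noteq> x (nbr v ! j)}"
    have "1 \<le> card {j. j < length ?w \<and> ?w ! j \<noteq> map x (nbr v) ! j}"
      using that(2) unfolding l_eq hdist_def .
    then have "{j. j < length ?w \<and> ?w ! j \<noteq> map x (nbr v) ! j} \<noteq> {}" by (metis card.empty not_one_le_zero)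
    then obtain j where j: "j < length ?w" "?w ! j \<noteq> map x (nbr v) ! j" by auto
    have lw: "length ?w = length (nbr v)" using Clen dec nbrp[OF that(1)] by auto
    have ne: "?A \<noteq> {}" using j lw by auto
    have fin: "finite ?A" by (rule finite_subset[of _ "set (nbr v)"]) auto
    have "fd v = Min ?A" by (simp add: fd_def first_diff_def local_view_def)
    then have "fd v \<in> ?A" using Min_in[OF fin ne] by simp
    then show ?thesis by auto
  qed
  have small: "Decode C0 (map x (nbr v)) = map y (nbr v)" if "v \<in> R" "real (e v) < t" for v
  proof (rule ccontr)
    assume "Decode C0 (map x (nbr v)) \<noteq> map y (nbr v)"
    then have "d0 \<le> l v + e v" by (rule tri[OF that(1)])
    then show False using l_le_e[OF that(1)] that(2) by (simp add: t_def)
  qed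
  have p_eq: "p i = (\<Sum>v\<in>{v\<in>S. fd v = i}. val v)" for i
  proof -
    have "{v\<in>R. 1 \<le> loc_err nbr C0 x v \<and> real (loc_err nbr C0 x v) < t \<and>
                   first_diff nbr C0 x v = i} = {v\<in>S. fd v = i}"
      by (auto simp: S_def l_def fd_def)
    then show ?thesis by (simp add: p_def deter_p_def val_def l_def)
  qed
  have W_eq: "W = (\<lambda>i. real i / real (c * d0)) ` {..c * d0}"
    by (auto simp: W_def Wset_def)
  have finW: "finite W" using W_eq by simp
  have pW: "p i \<in> W" if "i \<in> {1..n}" for i
  proof -
    let ?A = "{v\<in>S. fd v = i}"
    have finA: "finite ?A" using finS by simp
    have val2: "val v = real (d0 - 2 * l v) / real (c * d0)" if "v \<in> S" for v
    proof -
      have "2 * l v < d0" using that by (simp add: S_def t_def)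
      then have "real (d0 - 2 * l v) = real d0 - 2 * real (l v)" by simp
      then show ?thesis using cpos d0pos by (simp add: val_def t_def field_simps)
    qed
    have "p i = (\<Sum>v\<in>?A. real (d0 - 2 * l v) / real (c * d0))"
      unfolding p_eq by (rule sum.cong) (auto simp: val2)
    also have "\<dots> = real (\<Sum>v\<in>?A. d0 - 2 * l v) / real (c * d0)"
      by (simp add: sum_divide_distrib)
    finally have pi: "p i = real (\<Sum>v\<in>?A. d0 - 2 * l v) / real (c * d0)" .
    have "?A \<subseteq> {v\<in>R. i \<in> set (nbr v)}"
      using fd_mem by (auto simp: S_def)
    moreover have "finite {v\<in>R. i \<in> set (nbr v)}" using finR by simp
    ultimately have "card ?A \<le> card {v\<in>R. i \<in> set (nbr v)}" by (intro card_mono)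
    then have "card ?A \<le> c" using deg[OF that] by simp
    have "(\<Sum>v\<in>?A. d0 - 2 * l v) \<le> (\<Sum>v\<in>?A. d0)" by (rule sum_mono) auto
    also have "\<dots> = card ?A * d0" by simp
    also have "\<dots> \<le> c * d0" using \<open>card ?A \<le> c\<close> by simp
    finally have le: "(\<Sum>v\<in>?A. d0 - 2 * l v) \<le> c * d0" .
    show ?thesis unfolding W_eq pi by (rule imageI) (use le in simp)
  qed
  have Pq: "P q = {i. i \<in> {1..n} \<and> p i = q}" for q
    by (simp add: P_def Pset_def p_def)
  have qa: "q * a q = (\<Sum>i\<in>P q. sg i * p i)" for q
  proof -
    have finP: "finite (P q)" by (simp add: Pq)
    have "(\<Sum>i\<in>P q. sg i * p i) = (\<Sum>i\<in>P q. sg i * q)"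
      by (rule sum.cong) (auto simp: Pq)
    also have "\<dots> = q * (\<Sum>i\<in>P q. sg i)" by (simp add: sum_distrib_left mult.commute)
    also have "(\<Sum>i\<in>P q. sg i) = (\<Sum>i\<in>P q \<inter> F. sg i) + (\<Sum>i\<in>P q - F. sg i)"
      by (rule sum.Int_Diff[OF finP])
    also have "\<dots> = a q" by (simp add: sg_def a_def)
    finally show ?thesis by simp
  qed
  have stepB: "(\<Sum>q\<in>W - {0}. q * a q) = (\<Sum>i\<in>{1..n}. sg i * p i)"
  proof -
    have "(\<Sum>q\<in>W - {0}. q * a q) = (\<Sum>q\<in>W. q * a q)"
      using finW by (simp add: sum_diff1)
    also have "\<dots> = (\<Sum>q\<in>W. \<Sum>i\<in>{i. i \<in> {1..n} \<and> p i = q}. sg i * p i)"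
      by (simp add: qa Pq)
    also have "\<dots> = (\<Sum>i\<in>{1..n}. sg i * p i)"
      by (rule sum.group) (use finW pW in auto)
    finally show ?thesis .
  qed
  have fdS: "fd ` S \<subseteq> {1..n}" using fd_mem nbrp by (fastforce simp: S_def)
  have stepC: "(\<Sum>i\<in>{1..n}. sg i * p i) = (\<Sum>v\<in>S. sg (fd v) * val v)"
  proof -
    have "(\<Sum>i\<in>{1..n}. sg i * p i) = (\<Sum>i\<in>{1..n}. \<Sum>v\<in>{v. v \<in> S \<and> fd v = i}. sg (fd v) * val v)"
      by (rule sum.cong) (auto simp: p_eq sum_distrib_left)
    also have "\<dots> = (\<Sum>v\<in>S. sg (fd v) * val v)"
      by (rule sum.group) (use finS fdS in auto)
    finally show ?thesis .
  qed
  define N where "N = {v\<in>R. 1 \<le> e v}"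
  have Nnb: "N = nbhd R nbr F"
  proof -
    have "1 \<le> e v \<longleftrightarrow> (\<exists>i\<in>F. i \<in> set (nbr v))" for v
    proof -
      have "1 \<le> e v \<longleftrightarrow> set (nbr v) \<inter> F \<noteq> {}" using finF by (auto simp: e_def card_gt_0_iff Suc_le_eq)
      then show ?thesis by auto
    qed
    then show ?thesis by (auto simp: N_def nbhd_def)
  qed
  have perv: "(if v \<in> S then sg (fd v) * val v else 0) \<ge> (if 1 \<le> e v then (t - real (e v)) / (real c * t) else 0)"
    if v: "v \<in> R" for v
  proof -
    have ct: "real c * t > 0" using cpos tpos by simp
    have valnn: "val v \<ge> 0" if "v \<in> S" using that ct by (simp add: S_def val_def)
    show ?thesis
    proof (cases "1 \<le> e v")
      case False
      then have "l v = 0" using l_le_e[OF v] by simp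
      then show ?thesis using False by (simp add: S_def)
    next
      case e1: True
      show ?thesis
      proof (cases "real (e v) < t")
        case True
        have "l v = e v" using small[OF v True] by (simp add: l_eq e_eq[OF v])
        then have vS: "v \<in> S" using e1 True v by (simp add: S_def)
        obtain j where j: "j < length (nbr v)" "nbr v ! j = fd v"
          "Decode C0 (map x (nbr v)) ! j \<noteq> x (nbr v ! j)"
          using fd_mem[OF v] e1 \<open>l v = e v\<close> by auto
        have "fd v \<in> F" using j small[OF v True] nbrp[OF v]
          by (auto simp: F_def diffset_def) (metis nth_mem subsetD atLeastAtMost_iff)+
        then show ?thesis using vS e1 \<open>l v = e v\<close> by (simp add: sg_def val_def)
      next
        case False
        have neg: "(t - real (e v)) / (real c * t) \<le> 0" using False ct
          by (simp add: divide_nonpos_pos)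
        show ?thesis
        proof (cases "v \<in> S")
          case False then show ?thesis using neg e1 by simp
        next
          case vS: True
          have "Decode C0 (map x (nbr v)) \<noteq> map y (nbr v)"
          proof
            assume "Decode C0 (map x (nbr v)) = map y (nbr v)"
            then have "l v = e v" by (simp add: l_eq e_eq[OF v])
            then show False using vS False by (simp add: S_def)
          qed
          then have "d0 \<le> l v + e v" by (rule tri[OF v])
          then have "real d0 \<le> real (l v) + real (e v)" by linarith
          then have "t - real (e v) \<le> real (l v) - t" by (simp add: t_def)
          then have "(t - real (e v)) / (real c * t) \<le> (real (l v) - t) / (real c * t)"
            using ct by (simp add: divide_right_mono)
          also have "\<dots> = - val v" unfolding val_def by (metis minus_diff_eq minus_divide_left)
          also have "- val v \<le> sg (fd v) * val v" using valnn[OF vS] by (simp add: sg_def)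
          finally show ?thesis using vS e1 by simp
        qed
      qed
    qed
  qed
  have stepD: "(\<Sum>v\<in>S. sg (fd v) * val v) \<ge> (\<Sum>v\<in>N. (t - real (e v)) / (real c * t))"
  proof -
    have "(\<Sum>v\<in>S. sg (fd v) * val v) = (\<Sum>v\<in>R \<inter> S. sg (fd v) * val v)"
      by (rule sum.cong) (auto simp: S_def)
    also have "\<dots> = (\<Sum>v\<in>R. if v \<in> S then sg (fd v) * val v else 0)"
      by (rule sum.inter_restrict[OF finR])
    also have "\<dots> \<ge> (\<Sum>v\<in>R. if 1 \<le> e v then (t - real (e v)) / (real c * t) else 0)"
      by (rule sum_mono) (rule perv)
    also have "(\<Sum>v\<in>R. if 1 \<le> e v then (t - real (e v)) / (real c * t) else 0)
        = (\<Sum>v\<in>R \<inter> {v. 1 \<le> e v}. (t - real (e v)) / (real c * t))"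
      by (simp add: sum.inter_restrict[OF finR])
    also have "R \<inter> {v. 1 \<le> e v} = N" by (auto simp: N_def)
    finally show ?thesis .
  qed
  have stepE: "(\<Sum>v\<in>R. e v) = c * card F"
  proof -
    have "(\<Sum>v\<in>R. e v) = (\<Sum>v\<in>R. \<Sum>i\<in>F. if i \<in> set (nbr v) then 1 else 0)"
    proof (rule sum.cong)
      fix v assume "v \<in> R"
      have "e v = card (F \<inter> set (nbr v))" by (simp add: e_def Int_commute)
      also have "\<dots> = (\<Sum>i\<in>F \<inter> set (nbr v). 1)" by simp
      also have "\<dots> = (\<Sum>i\<in>F. if i \<in> set (nbr v) then 1 else 0)"
        by (rule sum.inter_restrict[OF finF])
      finally show "e v = (\<Sum>i\<in>F. if i \<in> set (nbr v) then 1 else 0)" .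
    qed simp
    also have "\<dots> = (\<Sum>i\<in>F. \<Sum>v\<in>R. if i \<in> set (nbr v) then 1 else 0)"
      by (rule sum.swap)
    also have "\<dots> = (\<Sum>i\<in>F. c)"
    proof (rule sum.cong)
      fix i assume i: "i \<in> F"
      have "(\<Sum>v\<in>R. if i \<in> set (nbr v) then 1 else 0) = (\<Sum>v\<in>R \<inter> {v. i \<in> set (nbr v)}. 1::nat)"
        by (simp only: sum.inter_restrict[OF finR] mem_Collect_eq)
      also have "\<dots> = card (R \<inter> {v. i \<in> set (nbr v)})" by simp
      also have "R \<inter> {v. i \<in> set (nbr v)} = {v\<in>R. i \<in> set (nbr v)}" by auto
      also have "card {v\<in>R. i \<in> set (nbr v)} = c" using deg i Fsub by auto
      finally show "(\<Sum>v\<in>R. if i \<in> set (nbr v) then 1 else 0) = c" .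
    qed simp
    finally show ?thesis by simp
  qed
  define Y where "Y = (\<Sum>v\<in>S. sg (fd v) * val v)"
  have Nge: "real (card N) \<ge> \<delta> * real c * real (card F)"
    using expa[OF Fsub] assms(6) by (simp add: Nnb F_def)
  have sumN: "(\<Sum>v\<in>N. real (e v)) = real (c * card F)"
  proof -
    have "(\<Sum>v\<in>R. e v) = (\<Sum>v\<in>R. if 1 \<le> e v then e v else 0)"
      by (rule sum.cong) auto
    also have "\<dots> = (\<Sum>v\<in>R \<inter> {v. 1 \<le> e v}. e v)"
      by (simp add: sum.inter_restrict[OF finR])
    also have "R \<inter> {v. 1 \<le> e v} = N" by (auto simp: N_def)
    finally have "(\<Sum>v\<in>N. e v) = c * card F" using stepE by simp
    then show ?thesis by (metis of_nat_sum)
  qed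
  have finN: "finite N" using finR by (simp add: N_def)
  have D2: "(\<Sum>v\<in>N. (t - real (e v)) / (real c * t)) = (t * real (card N) - real (c * card F)) / (real c * t)"
    by (simp add: sum_divide_distrib[symmetric] sum_subtractf sumN)
  have ct: "real c * t > 0" using cpos tpos by simp
  have "(t * (\<delta> * real c * real (card F)) - real (c * card F)) / (real c * t)
      \<le> (t * real (card N) - real (c * card F)) / (real c * t)"
    by (rule divide_right_mono) (use Nge tpos ct in auto)
  moreover have "real (c * d0) * X = (t * (\<delta> * real c * real (card F)) - real (c * card F)) / (real c * t)"
    using cpos d0pos dpos by (simp add: X_def t_def field_simps power2_eq_square)
  ultimately have Ylow: "real (c * d0) * X \<le> Y"
    using stepD D2 by (simp add: Y_def)
  have Xnn: "X \<ge> 0"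
  proof -
    have "1 / \<delta> < real d0 / 2" using assms(1) dpos by (simp add: field_simps)
    then show ?thesis using cpos dpos by (simp add: X_def)
  qed
  have YB: "Y = (\<Sum>q\<in>W - {0}. q * a q)" using stepB stepC by (simp add: Y_def)
  show ?thesis
  proof (rule ccontr)
    assume nt: "\<not> ?thesis"
    have lt: "a q < X" if "q \<in> W - {0}" for q
      using nt that unfolding a_def P_def F_def X_def W_def t_def by force
    have q01: "0 < q \<and> q \<le> 1" if "q \<in> W - {0}" for q
      using that cpos d0pos by (auto simp: W_eq) (metis of_nat_mono of_nat_mult)
    have qlt: "q * a q < X" if "q \<in> W - {0}" for q
    proof (cases "a q \<ge> 0")
      case True
      have "q * a q \<le> 1 * a q" using q01[OF that] True by (intro mult_right_mono) auto
      then show ?thesis using lt[OF that] by simp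
    next
      case False
      then have "q * a q < 0" using q01[OF that] by (simp add: mult_pos_neg)
      then show ?thesis using Xnn by simp
    qed
    have oneW: "1 \<in> W - {0}"
    proof -
      have "real (c * d0) / real (c * d0) = 1" using cpos d0pos by simp
      then have "1 \<in> (\<lambda>i. real i / real (c * d0)) ` {..c * d0}"
        by (metis atMost_iff image_eqI order_refl)
      then show ?thesis by (simp add: W_eq)
    qed
    have cardW: "card (W - {0}) \<le> c * d0"
    proof -
      have "W - {0} \<subseteq> (\<lambda>i. real i / real (c * d0)) ` {1..c * d0}"
        by (auto simp: W_eq)
      then have "card (W - {0}) \<le> card ((\<lambda>i. real i / real (c * d0)) ` {1..c * d0})"
        by (intro card_mono) auto
      also have "\<dots> \<le> card {1..c * d0}" by (rule card_image_le) simp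
      finally show ?thesis by simp
    qed
    have "(\<Sum>q\<in>W - {0}. q * a q) < (\<Sum>q\<in>W - {0}. X)"
      by (rule sum_strict_mono) (use finW oneW qlt in auto)
    also have "\<dots> = real (card (W - {0})) * X" by simp
    also have "\<dots> \<le> real (c * d0) * X" using cardW Xnn by (intro mult_right_mono) (simp only: of_nat_le_iff, simp)
    finally show False using Ylow YB by simp
  qed
qed
end
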